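(* Assume (A1), (A2), (A4), and suppose $m_1=M>1$ and $m_2=\dots=m_K=m<1$. Let $p:=\sum_{j=2}^K d_{1j}$. Let the random disperser start at $X_0=1$, let $\sigma:=\inf\{n\ge0: X_n\neq 1\}$ and $S:=\inf\{n\ge0: X_{\sigma+n}=1\}$, and define $e:=\mathbb E(m^S)=\sum_{k\ge1}m^k\,\mathbb P(S=k)$. Then, starting from one individual in patch $1$, the population persists with positive probability if and only if $$ M(1-p)+eMp>1. $$
   Context: Model: $K\ge2$ patches, stochastic dispersal matrix $D=(d_{ij})$; at each generation every individual in patch $i$ independently produces a random number of offspring distributed as $N_i$ with mean $m_i$, and each offspring independently moves from patch $i$ to patch $j$ with probability $d_{ij}$. "Persists with positive probability" means the total population is nonzero at all generations with positive probability. The random disperser $(X_n)$ is the Markov chain with transition matrix $D$. Assumptions: (A1) $\mathbb P(N_1=1)<1$; (A2) $\mathbb E(N_i)<\infty$ for all $i$; (A4) $D$ is irreducible. *)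

theory Defs
  imports "HOL-Probability.Probability"
begin

fun iid_sum :: "nat \<Rightarrow> ('k \<Rightarrow> nat) pmf \<Rightarrow> ('k \<Rightarrow> nat) pmf" where
  "iid_sum 0 p = return_pmf (\<lambda>_. 0)"
| "iid_sum (Suc n) p = bind_pmf p (\<lambda>x. map_pmf (\<lambda>y k. x k + y k) (iid_sum n p))"

definition unit_vec :: "'k \<Rightarrow> 'k \<Rightarrow> nat" where
  "unit_vec j = (\<lambda>k. if k = j then 1 else 0)"

text \<open>Vector of offspring counts (by destination patch) of one individual in patch i:
  N i offspring, each dispersing independently according to Disp i (d_ij = pmf (Disp i) j).\<close>
definition offspring_vec :: "('k \<Rightarrow> nat pmf) \<Rightarrow> ('k \<Rightarrow> 'k pmf) \<Rightarrow> 'k \<Rightarrow> ('k \<Rightarrow> nat) pmf" where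
  "offspring_vec N Disp i = bind_pmf (N i) (\<lambda>n. iid_sum n (map_pmf unit_vec (Disp i)))"

definition bp_step :: "('k::finite \<Rightarrow> nat pmf) \<Rightarrow> ('k \<Rightarrow> 'k pmf) \<Rightarrow> ('k \<Rightarrow> nat) \<Rightarrow> ('k \<Rightarrow> nat) pmf" where
  "bp_step N Disp z = map_pmf (\<lambda>f j. \<Sum>i\<in>UNIV. f i j)
      (Pi_pmf UNIV (\<lambda>_. 0) (\<lambda>i. iid_sum (z i) (offspring_vec N Disp i)))"

text \<open>Path space of the population process (random mapping representation of the Markov chain).\<close>
definition bp_space :: "('k::finite \<Rightarrow> nat pmf) \<Rightarrow> ('k \<Rightarrow> 'k pmf)
    \<Rightarrow> (nat \<Rightarrow> ('k \<Rightarrow> nat) \<Rightarrow> ('k \<Rightarrow> nat)) measure" where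
  "bp_space N Disp = PiM UNIV (\<lambda>n. PiM UNIV (\<lambda>z. measure_pmf (bp_step N Disp z)))"

fun bp_path :: "('k \<Rightarrow> nat) \<Rightarrow> (nat \<Rightarrow> ('k \<Rightarrow> nat) \<Rightarrow> ('k \<Rightarrow> nat)) \<Rightarrow> nat \<Rightarrow> ('k \<Rightarrow> nat)" where
  "bp_path z0 \<omega> 0 = z0"
| "bp_path z0 \<omega> (Suc n) = \<omega> n (bp_path z0 \<omega> n)"

definition persist_prob :: "('k::finite \<Rightarrow> nat pmf) \<Rightarrow> ('k \<Rightarrow> 'k pmf) \<Rightarrow> ('k \<Rightarrow> nat) \<Rightarrow> real" where
  "persist_prob N Disp z0 = measure (bp_space N Disp)
     {\<omega> \<in> space (bp_space N Disp). \<forall>n. (\<Sum>k\<in>UNIV. bp_path z0 \<omega> n k) \<noteq> 0}"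

definition rd_space :: "('k::finite \<Rightarrow> 'k pmf) \<Rightarrow> (nat \<Rightarrow> 'k \<Rightarrow> 'k) measure" where
  "rd_space Disp = PiM UNIV (\<lambda>n. measure_pmf (Pi_pmf UNIV undefined Disp))"

fun rd_path :: "'k \<Rightarrow> (nat \<Rightarrow> 'k \<Rightarrow> 'k) \<Rightarrow> nat \<Rightarrow> 'k" where
  "rd_path x0 \<omega> 0 = x0"
| "rd_path x0 \<omega> (Suc n) = \<omega> n (rd_path x0 \<omega> n)"

text \<open>P(S = k) for X_0 = i0, sigma = first exit time from i0, S = time after sigma until
  first return to i0.\<close>
definition return_prob :: "('k::finite \<Rightarrow> 'k pmf) \<Rightarrow> 'k \<Rightarrow> nat \<Rightarrow> real" where
  "return_prob Disp i0 k = measure (rd_space Disp)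
     {\<omega> \<in> space (rd_space Disp). \<exists>s. rd_path i0 \<omega> s \<noteq> i0 \<and> (\<forall>t<s. rd_path i0 \<omega> t = i0)
         \<and> rd_path i0 \<omega> (s + k) = i0 \<and> (\<forall>t<k. rd_path i0 \<omega> (s + t) \<noteq> i0)}"

end

theory Submission
  imports Defs
begin


lemma rd_path_Suc': "rd_path y \<omega> (Suc t) = rd_path (\<omega> 0 y) (\<lambda>n. \<omega> (Suc n)) t"
  by (induction t) auto

lemma rd_path_case_nat: "rd_path y (case_nat s \<omega>) = case_nat y (rd_path (s y) \<omega>)"
proof
  fix t show "rd_path y (case_nat s \<omega>) t = case_nat y (rd_path (s y) \<omega>) t"
    by (cases t) (simp_all add: rd_path_Suc' del: rd_path.simps(2))
qed

lemma rd_path_meas: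
  fixes B :: "('a::countable \<Rightarrow> 'a) measure"
  assumes ev: "\<And>a. (\<lambda>s. s a) \<in> measurable B (count_space UNIV)"
  shows "(\<lambda>\<omega>. rd_path y \<omega> t) \<in> measurable (PiM UNIV (\<lambda>_::nat. B)) (count_space UNIV)"
proof (induction t)
  case 0 then show ?case by simp
next
  case (Suc t)
  have "(\<lambda>\<omega>. (\<lambda>i \<omega>. \<omega> t i) (rd_path y \<omega> t) \<omega>) \<in> measurable (PiM UNIV (\<lambda>_::nat. B)) (count_space UNIV)"
  proof (rule measurable_compose_countable'[OF _ Suc])
    fix i :: 'a
    show "(\<lambda>\<omega>. \<omega> t i) \<in> measurable (PiM UNIV (\<lambda>_::nat. B)) (count_space UNIV)"
      using measurable_compose[OF measurable_component_singleton[of t UNIV "\<lambda>_. B"] ev[of i]] by simp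
  qed simp
  then show ?case by simp
qed

lemma rd_path_meas':
  fixes B :: "('a::countable \<Rightarrow> 'a) measure"
  assumes ev: "\<And>a. (\<lambda>s. s a) \<in> measurable B (count_space UNIV)"
  shows "(\<lambda>\<omega>. rd_path y \<omega>) \<in> measurable (PiM UNIV (\<lambda>_::nat. B)) (PiM UNIV (\<lambda>_::nat. count_space UNIV))"
  using rd_path_meas[OF ev] by (intro measurable_PiM_single') (auto simp: space_PiM)

lemma markov_nn:
  fixes B :: "('a::countable \<Rightarrow> 'a) measure"
  assumes B: "prob_space B" and ev: "\<And>a. (\<lambda>s. s a) \<in> measurable B (count_space UNIV)"
    and f: "f \<in> borel_measurable (PiM UNIV (\<lambda>_::nat. count_space (UNIV::'a set)))"
  shows "(\<integral>\<^sup>+\<omega>. f (rd_path y \<omega>) \<partial>PiM UNIV (\<lambda>_::nat. B))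
       = (\<integral>\<^sup>+s. \<integral>\<^sup>+\<omega>. f (case_nat y (rd_path (s y) \<omega>)) \<partial>PiM UNIV (\<lambda>_::nat. B) \<partial>B)"
proof -
  interpret sequence_space B
    unfolding sequence_space_def product_prob_space_def product_prob_space_axioms_def product_sigma_finite_def
    using B by (auto intro: prob_space_imp_sigma_finite)
  have fm: "(\<lambda>\<omega>. f (rd_path y \<omega>)) \<in> borel_measurable S"
    using measurable_comp[OF rd_path_meas'[OF ev] f] by (simp add: comp_def)
  have cm: "(\<lambda>(s, \<omega>). case_nat s \<omega>) \<in> measurable (B \<Otimes>\<^sub>M S) S"
    by measurable
  have "(\<integral>\<^sup>+\<omega>. f (rd_path y \<omega>) \<partial>S) = (\<integral>\<^sup>+\<omega>. f (rd_path y \<omega>) \<partial>distr (B \<Otimes>\<^sub>M S) S (\<lambda>(s, \<omega>). case_nat s \<omega>))"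
    by (simp add: PiM_iter)
  also have "\<dots> = (\<integral>\<^sup>+x. f (rd_path y (case_prod case_nat x)) \<partial>(B \<Otimes>\<^sub>M S))"
    by (rule nn_integral_distr[OF cm]) (use fm in simp)
  also have "\<dots> = (\<integral>\<^sup>+s. \<integral>\<^sup>+\<omega>. f (rd_path y (case_nat s \<omega>)) \<partial>S \<partial>B)"
  proof (subst P.nn_integral_fst[symmetric])
    show "(\<lambda>x. f (rd_path y (case_prod case_nat x))) \<in> borel_measurable (B \<Otimes>\<^sub>M S)"
      using measurable_comp[OF cm fm] by (simp add: comp_def split_beta')
  qed simp
  finally show ?thesis by (simp add: rd_path_case_nat)
qed



definition mf :: "('k::finite \<Rightarrow> real) \<Rightarrow> ('k \<Rightarrow> nat) \<Rightarrow> real" where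
  "mf u y = (\<Prod>i\<in>UNIV. u i ^ y i)"

definition phi :: "nat pmf \<Rightarrow> real \<Rightarrow> real" where
  "phi Q x = measure_pmf.expectation Q (\<lambda>n. x ^ n)"

definition Fm :: "('k::finite \<Rightarrow> nat pmf) \<Rightarrow> ('k \<Rightarrow> 'k pmf) \<Rightarrow> ('k \<Rightarrow> real) \<Rightarrow> 'k \<Rightarrow> real" where
  "Fm N Disp u = (\<lambda>a. phi (N a) (\<Sum>j\<in>UNIV. pmf (Disp a) j * u j))"

lemma mf_nonneg: "(\<And>i. 0 \<le> u i) \<Longrightarrow> 0 \<le> mf u y"
  by (auto simp: mf_def intro!: prod_nonneg)

lemma mf_le1: "(\<And>i. 0 \<le> u i) \<Longrightarrow> (\<And>i. u i \<le> 1) \<Longrightarrow> mf u y \<le> 1"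
  unfolding mf_def by (intro prod_le_1) (auto intro: power_le_one)

lemma mf_add: "mf u (\<lambda>k. x k + y k) = mf u x * mf u y"
  by (simp add: mf_def power_add prod.distrib)

lemma mf_unit: "mf u (unit_vec j) = u j"
proof -
  have "mf u (unit_vec j) = (\<Prod>i\<in>UNIV. if i = j then u i else 1)"
    unfolding mf_def unit_vec_def by (intro prod.cong) auto
  then show ?thesis by simp
qed

lemma nn_pmf_real:
  assumes "\<And>x. 0 \<le> f x" "\<And>x. f x \<le> 1"
  shows "(\<integral>\<^sup>+x. ennreal (f x) \<partial>measure_pmf M) = ennreal (measure_pmf.expectation M f)"
  using assms
  by (intro nn_integral_eq_integral measure_pmf.integrable_const_bound[where B=1]) auto

lemma nn_iid:
  assumes "\<And>i. 0 \<le> u i"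
  shows "(\<integral>\<^sup>+y. ennreal (mf u y) \<partial>measure_pmf (iid_sum n Q)) = (\<integral>\<^sup>+y. ennreal (mf u y) \<partial>measure_pmf Q) ^ n"
proof (induction n)
  case 0 then show ?case by (simp add: mf_def)
next
  case (Suc n)
  have "(\<integral>\<^sup>+y. ennreal (mf u y) \<partial>measure_pmf (iid_sum (Suc n) Q))
      = (\<integral>\<^sup>+x. \<integral>\<^sup>+y. ennreal (mf u x) * ennreal (mf u y) \<partial>measure_pmf (iid_sum n Q) \<partial>measure_pmf Q)"
    by (simp add: mf_add ennreal_mult mf_nonneg assms)
  also have "\<dots> = (\<integral>\<^sup>+x. ennreal (mf u x) * (\<integral>\<^sup>+y. ennreal (mf u y) \<partial>measure_pmf (iid_sum n Q)) \<partial>measure_pmf Q)"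
    by (simp add: nn_integral_cmult)
  also have "\<dots> = (\<integral>\<^sup>+x. ennreal (mf u x) \<partial>measure_pmf Q) * (\<integral>\<^sup>+y. ennreal (mf u y) \<partial>measure_pmf (iid_sum n Q))"
    by (simp add: nn_integral_multc)
  finally show ?case using Suc by (simp add: mult.commute)
qed

lemma nn_disp:
  fixes u :: "'k::finite \<Rightarrow> real"
  assumes "\<And>i. 0 \<le> u i"
  shows "(\<integral>\<^sup>+y. ennreal (mf u y) \<partial>measure_pmf (map_pmf unit_vec D)) = ennreal (\<Sum>j\<in>UNIV. pmf D j * u j)"
proof -
  have "(\<integral>\<^sup>+y. ennreal (mf u y) \<partial>measure_pmf (map_pmf unit_vec D)) = (\<integral>\<^sup>+j. ennreal (u j) \<partial>measure_pmf D)"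
    by (simp add: mf_unit)
  also have "\<dots> = (\<Sum>j\<in>UNIV. ennreal (pmf D j) * ennreal (u j))"
    by (simp add: nn_integral_measure_pmf nn_integral_count_space_finite)
  also have "\<dots> = ennreal (\<Sum>j\<in>UNIV. pmf D j * u j)"
    using assms by (subst sum_ennreal[symmetric]) (auto simp: ennreal_mult)
  finally show ?thesis .
qed

lemma disp_sum_le1:
  fixes u :: "'k::finite \<Rightarrow> real"
  assumes "\<And>i. 0 \<le> u i" "\<And>i. u i \<le> 1"
  shows "0 \<le> (\<Sum>j\<in>UNIV. pmf D j * u j)" "(\<Sum>j\<in>UNIV. pmf D j * u j) \<le> 1"
proof -
  show "0 \<le> (\<Sum>j\<in>UNIV. pmf D j * u j)" using assms by (auto intro!: sum_nonneg)
  have "(\<Sum>j\<in>UNIV. pmf D j * u j) \<le> (\<Sum>j\<in>UNIV. pmf D j)"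
    using assms by (intro sum_mono) (auto intro: mult_left_le)
  also have "\<dots> = 1" by (simp add: sum_pmf_eq_1)
  finally show "(\<Sum>j\<in>UNIV. pmf D j * u j) \<le> 1" .
qed

lemma phi_bounds: "0 \<le> x \<Longrightarrow> x \<le> 1 \<Longrightarrow> 0 \<le> phi Q x \<and> phi Q x \<le> 1"
  unfolding phi_def
  by (auto intro!: integral_nonneg_AE measure_pmf.integral_le_const measure_pmf.integrable_const_bound[where B=1]
      simp: power_le_one)

lemma nn_offspring:
  fixes u :: "'k::finite \<Rightarrow> real"
  assumes "\<And>i. 0 \<le> u i" "\<And>i. u i \<le> 1"
  shows "(\<integral>\<^sup>+y. ennreal (mf u y) \<partial>measure_pmf (offspring_vec N Disp a)) = ennreal (Fm N Disp u a)"
proof -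
  let ?s = "\<Sum>j\<in>UNIV. pmf (Disp a) j * u j"
  have s: "0 \<le> ?s" "?s \<le> 1" using disp_sum_le1[of u "Disp a", OF assms] by auto
  have "(\<integral>\<^sup>+y. ennreal (mf u y) \<partial>measure_pmf (offspring_vec N Disp a))
      = (\<integral>\<^sup>+n. ennreal (?s ^ n) \<partial>measure_pmf (N a))"
    unfolding offspring_vec_def using assms s nn_disp[of u "Disp a", OF assms(1)]
    by (simp add: nn_iid ennreal_power)
  also have "\<dots> = ennreal (Fm N Disp u a)"
    unfolding Fm_def phi_def using s by (intro nn_pmf_real) (auto simp: power_le_one)
  finally show ?thesis .
qed

lemma nn_bp_step:
  fixes u :: "'k::finite \<Rightarrow> real"
  assumes "\<And>i. 0 \<le> u i" "\<And>i. u i \<le> 1"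
  shows "(\<integral>\<^sup>+y. ennreal (mf u y) \<partial>measure_pmf (bp_step N Disp z)) = ennreal (mf (Fm N Disp u) z)"
proof -
  have F: "0 \<le> Fm N Disp u a" for a
    unfolding Fm_def using phi_bounds disp_sum_le1[of u "Disp a", OF assms] by blast
  have eq: "mf u (\<lambda>j. \<Sum>i\<in>UNIV. f i j) = (\<Prod>i\<in>UNIV. mf u (f i))" for f :: "'k \<Rightarrow> 'k \<Rightarrow> nat"
  proof -
    have "mf u (\<lambda>j. \<Sum>i\<in>UNIV. f i j) = (\<Prod>j\<in>UNIV. \<Prod>i\<in>UNIV. u j ^ f i j)"
      unfolding mf_def by (simp only: power_sum)
    also have "\<dots> = (\<Prod>i\<in>UNIV. \<Prod>j\<in>UNIV. u j ^ f i j)"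
      by (rule prod.swap)
    finally show ?thesis unfolding mf_def .
  qed
  have "(\<integral>\<^sup>+y. ennreal (mf u y) \<partial>measure_pmf (bp_step N Disp z))
     = (\<integral>\<^sup>+f. (\<Prod>i\<in>UNIV. ennreal (mf u (f i))) \<partial>measure_pmf (Pi_pmf UNIV (\<lambda>_. 0) (\<lambda>i. iid_sum (z i) (offspring_vec N Disp i))))"
    unfolding bp_step_def nn_integral_map_pmf
  proof (rule nn_integral_cong)
    fix f :: "'k \<Rightarrow> 'k \<Rightarrow> nat"
    show "ennreal (mf u (\<lambda>j. \<Sum>i\<in>UNIV. f i j)) = (\<Prod>i\<in>UNIV. ennreal (mf u (f i)))"
      by (simp only: eq, rule prod_ennreal[symmetric], rule mf_nonneg, rule assms)
  qed
  also have "\<dots> = (\<Prod>i\<in>UNIV. \<integral>\<^sup>+y. ennreal (mf u y) \<partial>measure_pmf (iid_sum (z i) (offspring_vec N Disp i)))"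
    by (rule nn_integral_prod_Pi_pmf) simp
  also have "\<dots> = (\<Prod>i\<in>UNIV. ennreal (Fm N Disp u i) ^ z i)"
    using assms by (simp add: nn_iid nn_offspring)
  also have "\<dots> = ennreal (mf (Fm N Disp u) z)"
    unfolding mf_def using F by (simp add: ennreal_power prod_ennreal prod_nonneg)
  finally show ?thesis .
qed



lemma bp_path_eq: "bp_path z \<omega> n = rd_path z \<omega> n"
  by (induction n) auto

abbreviation Bb :: "('k::finite \<Rightarrow> nat pmf) \<Rightarrow> ('k \<Rightarrow> 'k pmf) \<Rightarrow> (('k \<Rightarrow> nat) \<Rightarrow> ('k \<Rightarrow> nat)) measure" where
  "Bb N Disp \<equiv> PiM UNIV (\<lambda>z. measure_pmf (bp_step N Disp z))"

lemma Bb_prob: "prob_space (Bb N Disp)"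
  by (rule prob_space_PiM) (simp add: prob_space_measure_pmf)

lemma Bb_ev: "(\<lambda>s. s a) \<in> measurable (Bb N Disp) (count_space UNIV)"
proof -
  have "(\<lambda>s. s a) \<in> measurable (Bb N Disp) (measure_pmf (bp_step N Disp a))"
    by (rule measurable_component_singleton) simp
  then show ?thesis by (simp add: measurable_cong_sets)
qed

lemma Bb_distr: "(\<integral>\<^sup>+s. g (s a) \<partial>Bb N Disp) = (\<integral>\<^sup>+y. g y \<partial>measure_pmf (bp_step N Disp a))"
proof -
  interpret product_prob_space "\<lambda>z. measure_pmf (bp_step N Disp z)" UNIV
    unfolding product_prob_space_def product_prob_space_axioms_def product_sigma_finite_def
    by (auto intro: prob_space_imp_sigma_finite simp: prob_space_measure_pmf)
  have "(\<integral>\<^sup>+y. g y \<partial>measure_pmf (bp_step N Disp a)) = (\<integral>\<^sup>+y. g y \<partial>distr (Bb N Disp) (measure_pmf (bp_step N Disp a)) (\<lambda>\<omega>. \<omega> a))"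
    by (simp add: PiM_component)
  also have "\<dots> = (\<integral>\<^sup>+s. g (s a) \<partial>Bb N Disp)"
    by (rule nn_integral_distr) auto
  finally show ?thesis ..
qed

lemma E_rec:
  fixes h :: "('k::finite \<Rightarrow> nat) \<Rightarrow> real" and N :: "'k \<Rightarrow> nat pmf"
  shows "(\<integral>\<^sup>+\<omega>. ennreal (h (bp_path z \<omega> (Suc n))) \<partial>bp_space N Disp)
   = (\<integral>\<^sup>+y. \<integral>\<^sup>+\<omega>. ennreal (h (bp_path y \<omega> n)) \<partial>bp_space N Disp \<partial>measure_pmf (bp_step N Disp z))"
proof -
  have f: "(\<lambda>x. ennreal (h (x (Suc n)))) \<in> borel_measurable (PiM UNIV (\<lambda>_::nat. count_space (UNIV::('k \<Rightarrow> nat) set)))"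
  proof -
    have "(\<lambda>x. x (Suc n)) \<in> measurable (PiM UNIV (\<lambda>_::nat. count_space (UNIV::('k \<Rightarrow> nat) set))) (count_space UNIV)"
      by (rule measurable_component_singleton) simp
    moreover have "(\<lambda>y. ennreal (h y)) \<in> borel_measurable (count_space UNIV)" by simp
    ultimately show ?thesis using measurable_comp by (fastforce simp: comp_def)
  qed
  have "(\<integral>\<^sup>+\<omega>. ennreal (h (bp_path z \<omega> (Suc n))) \<partial>bp_space N Disp)
      = (\<integral>\<^sup>+\<omega>. ennreal (h (rd_path z \<omega> (Suc n))) \<partial>PiM UNIV (\<lambda>_::nat. Bb N Disp))"
    by (simp add: bp_space_def bp_path_eq del: rd_path.simps)
  also have "\<dots> = (\<integral>\<^sup>+s. \<integral>\<^sup>+\<omega>. ennreal (h (rd_path (s z) \<omega> n)) \<partial>PiM UNIV (\<lambda>_::nat. Bb N Disp) \<partial>Bb N Disp)"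
    using markov_nn[OF Bb_prob Bb_ev f, where y=z] by simp
  also have "\<dots> = (\<integral>\<^sup>+y. \<integral>\<^sup>+\<omega>. ennreal (h (rd_path y \<omega> n)) \<partial>PiM UNIV (\<lambda>_::nat. Bb N Disp) \<partial>measure_pmf (bp_step N Disp z))"
    by (rule Bb_distr)
  finally show ?thesis by (simp add: bp_space_def bp_path_eq del: rd_path.simps)
qed

lemma Fm_bounds:
  assumes "\<And>i. 0 \<le> u i" "\<And>i. u i \<le> 1"
  shows "0 \<le> Fm N Disp u a" "Fm N Disp u a \<le> 1"
  unfolding Fm_def using phi_bounds disp_sum_le1[of u "Disp a", OF assms] by blast+

lemma Fm_iter_bounds:
  assumes "\<And>i. 0 \<le> u i" "\<And>i. u i \<le> 1"
  shows "0 \<le> (Fm N Disp ^^ n) u a \<and> (Fm N Disp ^^ n) u a \<le> 1"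
  using assms
proof (induction n arbitrary: a)
  case 0 then show ?case by simp
next
  case (Suc n) then show ?case using Fm_bounds[of "(Fm N Disp ^^ n) u" N Disp a] by simp
qed

lemma bp_space_prob: "prob_space (bp_space N Disp)"
  unfolding bp_space_def by (rule prob_space_PiM) (rule Bb_prob)

lemma E_mf:
  assumes "\<And>i. 0 \<le> s i" "\<And>i. s i \<le> 1"
  shows "(\<integral>\<^sup>+\<omega>. ennreal (mf s (bp_path z \<omega> n)) \<partial>bp_space N Disp) = ennreal (mf ((Fm N Disp ^^ n) s) z)"
proof (induction n arbitrary: z)
  case 0
  interpret prob_space "bp_space N Disp" by (rule bp_space_prob)
  show ?case by (simp add: emeasure_space_1)
next
  case (Suc n)
  have b: "0 \<le> (Fm N Disp ^^ n) s i" "(Fm N Disp ^^ n) s i \<le> 1" for i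
    using Fm_iter_bounds[of s, OF assms] by auto
  have "(\<integral>\<^sup>+\<omega>. ennreal (mf s (bp_path z \<omega> (Suc n))) \<partial>bp_space N Disp)
     = (\<integral>\<^sup>+y. ennreal (mf ((Fm N Disp ^^ n) s) y) \<partial>measure_pmf (bp_step N Disp z))"
    by (simp only: E_rec Suc)
  also have "\<dots> = ennreal (mf (Fm N Disp ((Fm N Disp ^^ n) s)) z)"
    by (rule nn_bp_step) (use b in auto)
  finally show ?case by simp
qed



lemma mf_zero: "mf (\<lambda>_. 0) y = (if y = (\<lambda>_. 0) then 1 else 0)"
proof (cases "y = (\<lambda>_. 0)")
  case True then show ?thesis by (simp add: mf_def)
next
  case False
  then obtain i where "y i \<noteq> 0" by auto
  then have "(0::real) ^ y i = 0" by simp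
  then have "mf (\<lambda>_. 0) y = 0" unfolding mf_def by (intro prod_zero) auto
  with False show ?thesis by simp
qed

lemma bp_path_meas: "(\<lambda>\<omega>. bp_path z \<omega> n) \<in> measurable (bp_space N Disp) (count_space UNIV)"
  unfolding bp_space_def bp_path_eq by (rule rd_path_meas[OF Bb_ev])

lemma zero_set_sets: "{\<omega> \<in> space (bp_space N Disp). bp_path z \<omega> n = (\<lambda>_. 0)} \<in> sets (bp_space N Disp)"
  using bp_path_meas[of z n N Disp] by (simp add: measurable_count_space_eq2)

lemma measure_zero:
  "measure (bp_space N Disp) {\<omega> \<in> space (bp_space N Disp). bp_path z \<omega> n = (\<lambda>_. 0)}
    = mf ((Fm N Disp ^^ n) (\<lambda>_. 0)) z"
proof -
  let ?A = "{\<omega> \<in> space (bp_space N Disp). bp_path z \<omega> n = (\<lambda>_. 0)}"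
  have "emeasure (bp_space N Disp) ?A = (\<integral>\<^sup>+\<omega>. indicator ?A \<omega> \<partial>bp_space N Disp)"
    by (rule nn_integral_indicator[symmetric]) (rule zero_set_sets)
  also have "\<dots> = (\<integral>\<^sup>+\<omega>. ennreal (mf (\<lambda>_. 0) (bp_path z \<omega> n)) \<partial>bp_space N Disp)"
    by (rule nn_integral_cong) (simp add: mf_zero indicator_def)
  also have "\<dots> = ennreal (mf ((Fm N Disp ^^ n) (\<lambda>_. 0)) z)"
    by (rule E_mf) auto
  finally show ?thesis
    using mf_nonneg[of "(Fm N Disp ^^ n) (\<lambda>_. 0)"] Fm_iter_bounds[where u="\<lambda>_. 0" and N=N and Disp=Disp and n=n]
    by (simp add: measure_def)
qed

lemma bp_step_zero: "bp_step N Disp (\<lambda>_. 0) = return_pmf (\<lambda>_. 0)"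
  unfolding bp_step_def by simp

lemma AE_absorb: "AE \<omega> in bp_space N Disp. \<forall>n. \<omega> n (\<lambda>_. 0) = (\<lambda>_. 0)"
proof -
  interpret P1: product_prob_space "\<lambda>z. measure_pmf (bp_step N Disp z)" UNIV
    unfolding product_prob_space_def product_prob_space_axioms_def product_sigma_finite_def
    by (auto intro: prob_space_imp_sigma_finite simp: prob_space_measure_pmf)
  interpret P2: product_prob_space "\<lambda>_::nat. Bb N Disp" UNIV
    unfolding product_prob_space_def product_prob_space_axioms_def product_sigma_finite_def
    using Bb_prob by (auto intro: prob_space_imp_sigma_finite)
  have "AE s in Bb N Disp. s (\<lambda>_. 0) = (\<lambda>_. 0)"
    by (rule P1.AE_component) (auto simp: bp_step_zero AE_measure_pmf_iff)
  then have "AE \<omega> in bp_space N Disp. \<omega> n (\<lambda>_. 0) = (\<lambda>_. 0)" for n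
    unfolding bp_space_def by (rule P2.AE_component[rotated]) simp
  then show ?thesis by (simp add: AE_all_countable)
qed

lemma absorb_path:
  assumes "\<forall>n. \<omega> n (\<lambda>_. 0) = (\<lambda>_. 0)" "bp_path z \<omega> k = (\<lambda>_. 0)" "k \<le> n"
  shows "bp_path z \<omega> n = (\<lambda>_. 0)"
  using assms(3,2)
proof (induction n rule: dec_induct)
  case base then show ?case by simp
next
  case (step n) then show ?case using assms(1) by simp
qed

definition persist_set where
  "persist_set N Disp z0 = {\<omega> \<in> space (bp_space N Disp). \<forall>n. (\<Sum>k\<in>UNIV. bp_path z0 \<omega> n k) \<noteq> 0}"

lemma sum_zero_iff: "((\<Sum>k\<in>(UNIV::'k::finite set). (y::'k \<Rightarrow> nat) k) = 0) \<longleftrightarrow> y = (\<lambda>_. 0)"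
  by (auto simp: fun_eq_iff)

lemma persist_upper:
  "persist_prob N Disp z \<le> 1 - mf ((Fm N Disp ^^ n) (\<lambda>_. 0)) z"
proof -
  interpret prob_space "bp_space N Disp" by (rule bp_space_prob)
  let ?A = "{\<omega> \<in> space (bp_space N Disp). bp_path z \<omega> n = (\<lambda>_. 0)}"
  have "persist_prob N Disp z \<le> measure (bp_space N Disp) (space (bp_space N Disp) - ?A)"
    unfolding persist_prob_def
    by (rule finite_measure_mono) (use sets.compl_sets[OF zero_set_sets[of N Disp z n]] in \<open>auto simp: sum_zero_iff\<close>)
  also have "\<dots> = 1 - measure (bp_space N Disp) ?A"
    by (rule prob_compl[OF zero_set_sets])
  finally show ?thesis by (simp add: measure_zero)
qed

lemma persist_lower:
  assumes "\<And>n. mf ((Fm N Disp ^^ n) (\<lambda>_. 0)) z \<le> c"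
  shows "1 - c \<le> persist_prob N Disp z"
proof -
  interpret prob_space "bp_space N Disp" by (rule bp_space_prob)
  let ?S = "bp_space N Disp"
  define C where "C n = {\<omega> \<in> space ?S. \<exists>k\<le>n. bp_path z \<omega> k = (\<lambda>_. 0)}" for n
  have Cs: "C n \<in> sets ?S" for n
  proof -
    have "C n = (\<Union>k\<le>n. {\<omega> \<in> space ?S. bp_path z \<omega> k = (\<lambda>_. 0)})"
      unfolding C_def by auto
    then show ?thesis by (auto intro!: sets.finite_UN zero_set_sets)
  qed
  have Cm: "measure ?S (C n) \<le> c" for n
  proof -
    have "measure ?S (C n) = measure ?S {\<omega> \<in> space ?S. bp_path z \<omega> n = (\<lambda>_. 0)}"
    proof (rule measure_eq_AE)
      show "AE x in ?S. (x \<in> C n) = (x \<in> {\<omega> \<in> space ?S. bp_path z \<omega> n = (\<lambda>_. 0)})"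
        using AE_absorb
      proof (rule AE_mp, intro AE_I2 impI)
        fix x assume "x \<in> space ?S" "\<forall>n. x n (\<lambda>_. 0) = (\<lambda>_. 0)"
        then show "(x \<in> C n) = (x \<in> {\<omega> \<in> space ?S. bp_path z \<omega> n = (\<lambda>_. 0)})"
          unfolding C_def using absorb_path[of x z] by auto
      qed
    qed (use Cs zero_set_sets in auto)
    then show ?thesis using assms[of n] measure_zero[of N Disp z n] by linarith
  qed
  have inc: "incseq C" unfolding C_def incseq_def by (auto intro: order.trans)
  have "(\<lambda>n. measure ?S (C n)) \<longlonglongrightarrow> measure ?S (\<Union>n. C n)"
    by (rule finite_Lim_measure_incseq) (use Cs inc in auto)
  then have U: "measure ?S (\<Union>n. C n) \<le> c"
    by (rule LIMSEQ_le_const2) (use Cm in auto)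
  have eq: "persist_set N Disp z = space ?S - (\<Union>n. C n)"
    unfolding persist_set_def C_def by (auto simp: sum_zero_iff)
  have "persist_prob N Disp z = measure ?S (persist_set N Disp z)"
    unfolding persist_prob_def persist_set_def ..
  also have "\<dots> = measure ?S (space ?S - (\<Union>n. C n))"
    by (simp only: eq)
  also have "\<dots> = 1 - measure ?S (\<Union>n. C n)"
    using Cs by (intro prob_compl) auto
  finally show ?thesis using U by simp
qed



abbreviation Br :: "('k::finite \<Rightarrow> 'k pmf) \<Rightarrow> ('k \<Rightarrow> 'k) measure" where
  "Br Disp \<equiv> measure_pmf (Pi_pmf UNIV undefined Disp)"

lemma Br_ev: "(\<lambda>s. s a) \<in> measurable (Br Disp) (count_space UNIV)"
  by simp

lemma Br_distr: "(\<integral>\<^sup>+s. g (s a) \<partial>Br Disp) = (\<integral>\<^sup>+y. g y \<partial>measure_pmf (Disp a))"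
proof -
  have "(\<integral>\<^sup>+y. g y \<partial>measure_pmf (Disp a)) = (\<integral>\<^sup>+y. g y \<partial>measure_pmf (map_pmf (\<lambda>f. f a) (Pi_pmf UNIV undefined Disp)))"
    by (simp add: Pi_pmf_component)
  then show ?thesis by simp
qed

lemma rd_space_prob: "prob_space (rd_space Disp)"
  unfolding rd_space_def by (rule prob_space_PiM) (simp add: prob_space_measure_pmf)

lemma rd_step:
  fixes Disp :: "'k::finite \<Rightarrow> 'k pmf"
  assumes P: "Measurable.pred (PiM UNIV (\<lambda>_::nat. count_space (UNIV::'k set))) P"
  shows "measure (rd_space Disp) {\<omega> \<in> space (rd_space Disp). P (rd_path y \<omega>)}
    = (\<Sum>z\<in>UNIV. pmf (Disp y) z * measure (rd_space Disp) {\<omega> \<in> space (rd_space Disp). P (case_nat y (rd_path z \<omega>))})"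
proof -
  let ?PS = "PiM UNIV (\<lambda>_::nat. count_space (UNIV::'k set))"
  let ?S = "rd_space Disp"
  interpret prob_space ?S by (rule rd_space_prob)
  have sp: "space ?PS = UNIV" by (simp add: space_PiM)
  have Pset: "{x. P x} \<in> sets ?PS" using P sp by (simp add: pred_def)
  have f: "indicator {x. P x} \<in> borel_measurable ?PS"
    using Pset by simp
  have m1: "(\<lambda>\<omega>. rd_path y \<omega>) \<in> measurable ?S ?PS"
    unfolding rd_space_def by (rule rd_path_meas'[OF Br_ev])
  have m2: "(\<lambda>\<omega>. case_nat y (rd_path z \<omega>)) \<in> measurable ?S ?PS" for z
  proof -
    have "(\<lambda>\<omega>. rd_path z \<omega>) \<in> measurable ?S ?PS"
      unfolding rd_space_def by (rule rd_path_meas'[OF Br_ev])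
    then show ?thesis by (intro measurable_case_nat') auto
  qed
  have s1: "{\<omega> \<in> space ?S. P (rd_path y \<omega>)} \<in> sets ?S"
    using measurable_sets[OF m1 Pset] by (simp add: vimage_def Int_def conj_commute)
  have s2: "{\<omega> \<in> space ?S. P (case_nat y (rd_path z \<omega>))} \<in> sets ?S" for z
    using measurable_sets[OF m2 Pset] by (simp add: vimage_def Int_def conj_commute)
  have "(\<integral>\<^sup>+\<omega>. indicator {x. P x} (rd_path y \<omega>) \<partial>?S) = (\<integral>\<^sup>+\<omega>. indicator {\<omega> \<in> space ?S. P (rd_path y \<omega>)} \<omega> \<partial>?S)"
    by (rule nn_integral_cong) (auto simp: indicator_def)
  then have "emeasure ?S {\<omega> \<in> space ?S. P (rd_path y \<omega>)} = (\<integral>\<^sup>+\<omega>. indicator {x. P x} (rd_path y \<omega>) \<partial>?S)"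
    using s1 by simp
  also have "\<dots> = (\<integral>\<^sup>+s. \<integral>\<^sup>+\<omega>. indicator {x. P x} (case_nat y (rd_path (s y) \<omega>)) \<partial>?S \<partial>Br Disp)"
    unfolding rd_space_def by (rule markov_nn[OF _ Br_ev f]) (simp add: prob_space_measure_pmf)
  also have "\<dots> = (\<integral>\<^sup>+z. \<integral>\<^sup>+\<omega>. indicator {x. P x} (case_nat y (rd_path z \<omega>)) \<partial>?S \<partial>measure_pmf (Disp y))"
    by (rule Br_distr)
  also have "\<dots> = (\<integral>\<^sup>+z. ennreal (measure ?S {\<omega> \<in> space ?S. P (case_nat y (rd_path z \<omega>))}) \<partial>measure_pmf (Disp y))"
  proof (rule nn_integral_cong)
    fix z
    have "(\<integral>\<^sup>+\<omega>. indicator {x. P x} (case_nat y (rd_path z \<omega>)) \<partial>?S)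
        = (\<integral>\<^sup>+\<omega>. indicator {\<omega> \<in> space ?S. P (case_nat y (rd_path z \<omega>))} \<omega> \<partial>?S)"
      by (rule nn_integral_cong) (auto simp: indicator_def)
    also have "\<dots> = emeasure ?S {\<omega> \<in> space ?S. P (case_nat y (rd_path z \<omega>))}"
      using s2 by simp
    finally show "(\<integral>\<^sup>+\<omega>. indicator {x. P x} (case_nat y (rd_path z \<omega>)) \<partial>?S)
        = ennreal (measure ?S {\<omega> \<in> space ?S. P (case_nat y (rd_path z \<omega>))})"
      by (simp add: emeasure_eq_measure)
  qed
  also have "\<dots> = (\<Sum>z\<in>UNIV. ennreal (pmf (Disp y) z) * ennreal (measure ?S {\<omega> \<in> space ?S. P (case_nat y (rd_path z \<omega>))}))"
    by (simp add: nn_integral_measure_pmf nn_integral_count_space_finite)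
  also have "\<dots> = ennreal (\<Sum>z\<in>UNIV. pmf (Disp y) z * measure ?S {\<omega> \<in> space ?S. P (case_nat y (rd_path z \<omega>))})"
    by (subst sum_ennreal[symmetric]) (auto simp: ennreal_mult)
  finally show ?thesis
    by (simp add: emeasure_eq_measure sum_nonneg)
qed

definition hitp :: "'k \<Rightarrow> nat \<Rightarrow> (nat \<Rightarrow> 'k) \<Rightarrow> bool" where
  "hitp i0 k x = (x k = i0 \<and> (\<forall>t<k. x t \<noteq> i0))"

definition evp :: "'k \<Rightarrow> nat \<Rightarrow> (nat \<Rightarrow> 'k) \<Rightarrow> bool" where
  "evp i0 k x = (\<exists>s. x s \<noteq> i0 \<and> (\<forall>t<s. x t = i0) \<and> x (s + k) = i0 \<and> (\<forall>t<k. x (s + t) \<noteq> i0))"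

lemma hitp_pred: "Measurable.pred (PiM UNIV (\<lambda>_::nat. count_space (UNIV::'k set))) (hitp i0 k)"
  unfolding hitp_def by measurable

lemma evp_pred: "Measurable.pred (PiM UNIV (\<lambda>_::nat. count_space (UNIV::'k set))) (evp i0 k)"
  unfolding evp_def by measurable

definition H :: "('k::finite \<Rightarrow> 'k pmf) \<Rightarrow> 'k \<Rightarrow> 'k \<Rightarrow> nat \<Rightarrow> real" where
  "H Disp i0 j k = measure (rd_space Disp) {\<omega> \<in> space (rd_space Disp). hitp i0 k (rd_path j \<omega>)}"

definition R :: "('k::finite \<Rightarrow> 'k pmf) \<Rightarrow> 'k \<Rightarrow> 'k \<Rightarrow> nat \<Rightarrow> real" where
  "R Disp i0 j k = measure (rd_space Disp) {\<omega> \<in> space (rd_space Disp). evp i0 k (rd_path j \<omega>)}"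

lemma return_prob_R: "return_prob Disp i0 k = R Disp i0 i0 k"
  unfolding return_prob_def R_def evp_def ..

lemma H_0: "H Disp i0 j 0 = (if j = i0 then 1 else 0)"
proof -
  interpret prob_space "rd_space Disp" by (rule rd_space_prob)
  show ?thesis unfolding H_def hitp_def by (auto simp: prob_space)
qed

lemma H_i0_Suc: "H Disp i0 i0 (Suc k) = 0"
proof -
  have "\<not> hitp i0 (Suc k) (rd_path i0 \<omega>)" for \<omega>
    unfolding hitp_def by (metis rd_path.simps(1) zero_less_Suc)
  then show ?thesis unfolding H_def by simp
qed

lemma H_bounds: "0 \<le> H Disp i0 j k" "H Disp i0 j k \<le> 1"
proof -
  interpret prob_space "rd_space Disp" by (rule rd_space_prob)
  show "0 \<le> H Disp i0 j k" "H Disp i0 j k \<le> 1" unfolding H_def by auto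
qed

lemma R_bounds: "0 \<le> R Disp i0 j k" "R Disp i0 j k \<le> 1"
proof -
  interpret prob_space "rd_space Disp" by (rule rd_space_prob)
  show "0 \<le> R Disp i0 j k" "R Disp i0 j k \<le> 1" unfolding R_def by auto
qed

lemma H_Suc:
  assumes "j \<noteq> i0"
  shows "H Disp i0 j (Suc k) = (\<Sum>z\<in>UNIV. pmf (Disp j) z * H Disp i0 z k)"
proof -
  have eq: "hitp i0 (Suc k) (case_nat j x) = hitp i0 k x" for x :: "nat \<Rightarrow> _"
    unfolding hitp_def using assms by (auto simp: less_Suc_eq_0_disj)
  show ?thesis
    unfolding H_def by (subst rd_step[OF hitp_pred]) (simp add: eq)
qed

lemma R_H:
  assumes "j \<noteq> i0"
  shows "R Disp i0 j k = H Disp i0 j k"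
proof -
  have eq: "evp i0 k x = hitp i0 k x" if "x 0 \<noteq> i0" for x :: "nat \<Rightarrow> _"
  proof
    assume "evp i0 k x"
    then obtain s where s: "x s \<noteq> i0" "\<forall>t<s. x t = i0" "x (s + k) = i0" "\<forall>t<k. x (s + t) \<noteq> i0"
      unfolding evp_def by blast
    have "s = 0" using s(2) that by (cases s) auto
    then show "hitp i0 k x" using s unfolding hitp_def by auto
  next
    assume "hitp i0 k x"
    then show "evp i0 k x" unfolding hitp_def evp_def using that by (intro exI[of _ 0]) auto
  qed
  show ?thesis unfolding R_def H_def using assms by (simp add: eq)
qed

lemma R_i0:
  "R Disp i0 i0 k = (\<Sum>z\<in>UNIV. pmf (Disp i0) z * R Disp i0 z k)"
proof -
  have eq: "evp i0 k (case_nat i0 x) = evp i0 k x" for x :: "nat \<Rightarrow> _"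
  proof
    assume "evp i0 k (case_nat i0 x)"
    then obtain s where s: "case_nat i0 x s \<noteq> i0" "\<forall>t<s. case_nat i0 x t = i0"
      "case_nat i0 x (s + k) = i0" "\<forall>t<k. case_nat i0 x (s + t) \<noteq> i0"
      unfolding evp_def by blast
    then obtain s' where s': "s = Suc s'" by (cases s) auto
    show "evp i0 k x" unfolding evp_def
    proof (intro exI[of _ s'] conjI allI impI)
      show "x s' \<noteq> i0" using s(1) s' by simp
      show "x (s' + k) = i0" using s(3) s' by simp
      fix t
      show "t < s' \<Longrightarrow> x t = i0" using s(2) s' by (auto dest: spec[of _ "Suc t"])
      show "t < k \<Longrightarrow> x (s' + t) \<noteq> i0" using s(4) s' by (auto dest: spec[of _ t])
    qed
  next
    assume "evp i0 k x"
    then obtain s where s: "x s \<noteq> i0" "\<forall>t<s. x t = i0" "x (s + k) = i0" "\<forall>t<k. x (s + t) \<noteq> i0"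
      unfolding evp_def by blast
    show "evp i0 k (case_nat i0 x)" unfolding evp_def
    proof (intro exI[of _ "Suc s"] conjI allI impI)
      fix t assume "t < Suc s" then show "case_nat i0 x t = i0" using s(2) by (cases t) auto
    qed (use s in auto)
  qed
  show ?thesis unfolding R_def by (subst rd_step[OF evp_pred]) (simp add: eq)
qed



lemma pow_diff_le:
  fixes x y :: real
  assumes "0 \<le> x" "x \<le> y" "y \<le> 1"
  shows "y ^ n - x ^ n \<le> real n * (y - x)"
proof (induction n)
  case 0 then show ?case by simp
next
  case (Suc n)
  have "y ^ Suc n - x ^ Suc n = y * (y ^ n - x ^ n) + x ^ n * (y - x)"
    by (simp add: algebra_simps)
  also have "\<dots> \<le> 1 * (real n * (y - x)) + 1 * (y - x)"
  proof (intro add_mono mult_mono)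
    show "y ^ n - x ^ n \<le> real n * (y - x)" by (rule Suc)
    show "x ^ n \<le> 1" using assms by (simp add: power_le_one)
    show "0 \<le> y ^ n - x ^ n" using assms by (simp add: power_mono)
  qed (use assms in auto)
  finally show ?case by (simp add: algebra_simps)
qed

lemma pow_strict:
  fixes x :: real
  assumes "0 < x" "x \<le> 1" "2 \<le> n"
  shows "1 - real n * x < (1 - x) ^ n"
  using assms(3)
proof (induction n rule: dec_induct)
  case base
  have "(1 - x)^2 = 1 - 2 * x + x * x" by (simp add: power2_eq_square algebra_simps)
  then show ?case using assms by simp
next
  case (step n)
  have "(1 - real n * x) * (1 - x) \<le> (1 - x) ^ n * (1 - x)"
    using step.IH assms by (intro mult_right_mono) auto
  moreover have "1 - real (Suc n) * x < (1 - real n * x) * (1 - x)"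
  proof -
    have "0 < real n * x * x" using assms step.hyps by simp
    then show ?thesis by (simp add: algebra_simps)
  qed
  ultimately show ?case by (simp add: mult.commute)
qed

lemma int_pow: "0 \<le> (x::real) \<Longrightarrow> x \<le> 1 \<Longrightarrow> integrable (measure_pmf Q) (\<lambda>n. x ^ n)"
  apply (rule measure_pmf.integrable_const_bound[where B=1])
   apply (rule AE_I2)
  apply (auto simp: power_le_one)
  done

lemma phi_one: "phi Q 1 = 1"
proof -
  have "(\<lambda>n. (1::real) ^ n) = (\<lambda>_. 1)" by (rule ext) simp
  then show ?thesis unfolding phi_def by (simp only: ) simp
qed

lemma phi_mono:
  assumes "0 \<le> x" "x \<le> y" "y \<le> 1"
  shows "phi Q x \<le> phi Q y"
  unfolding phi_def using assms
  by (intro integral_mono int_pow power_mono) auto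

lemma phi_lip:
  assumes Q: "integrable (measure_pmf Q) real"
  assumes "0 \<le> x" "x \<le> y" "y \<le> 1"
  shows "phi Q y - phi Q x \<le> measure_pmf.expectation Q real * (y - x)"
proof -
  have "phi Q y - phi Q x = measure_pmf.expectation Q (\<lambda>n. y ^ n - x ^ n)"
    unfolding phi_def using assms by (subst Bochner_Integration.integral_diff) (auto intro!: int_pow)
  also have "\<dots> \<le> measure_pmf.expectation Q (\<lambda>n. real n * (y - x))"
    using assms by (intro integral_mono int_pow Bochner_Integration.integrable_diff integrable_mult_left Q pow_diff_le) auto
  also have "\<dots> = measure_pmf.expectation Q real * (y - x)"
    by simp
  finally show ?thesis .
qed

lemma phi_lin:
  assumes Q: "integrable (measure_pmf Q) real"
  assumes "0 \<le> x" "x \<le> 1"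
  shows "1 - phi Q (1 - x) \<le> measure_pmf.expectation Q real * x"
  using phi_lip[OF Q, of "1 - x" 1] assms by (simp add: phi_one)

lemma phi_strict:
  assumes Q: "integrable (measure_pmf Q) real" and M1: "measure_pmf.expectation Q real > 1"
  assumes "0 < x" "x \<le> 1"
  shows "1 - phi Q (1 - x) < measure_pmf.expectation Q real * x"
proof -
  interpret finite_measure "measure_pmf Q" by (rule measure_pmf.finite_measure_axioms)
  have A: "emeasure (measure_pmf Q) {n. 2 \<le> n} \<noteq> 0"
  proof
    assume "emeasure (measure_pmf Q) {n. 2 \<le> n} = 0"
    then have "AE n in measure_pmf Q. n \<notin> {n. 2 \<le> n}"
      by (intro AE_I'[of "{n. 2 \<le> n}"]) auto
    then have "AE n in measure_pmf Q. real n \<le> 1"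
      by eventually_elim auto
    then have "measure_pmf.expectation Q real \<le> measure_pmf.expectation Q (\<lambda>_. 1)"
      by (intro integral_mono_AE Q) auto
    then show False using M1 by simp
  qed
  have "1 - phi Q (1 - x) = measure_pmf.expectation Q (\<lambda>n. 1 - (1 - x) ^ n)"
    unfolding phi_def using assms by (subst Bochner_Integration.integral_diff) (auto intro!: int_pow)
  also have "\<dots> < measure_pmf.expectation Q (\<lambda>n. real n * x)"
  proof (rule measure_pmf.integral_less_AE[OF _ _ A])
    show "integrable (measure_pmf Q) (\<lambda>n. 1 - (1 - x) ^ n)"
      using assms by (intro Bochner_Integration.integrable_diff int_pow) auto
    show "integrable (measure_pmf Q) (\<lambda>n. real n * x)"
      by (intro integrable_mult_left Q)
    show "AE n in measure_pmf Q. n \<in> {n. 2 \<le> n} \<longrightarrow> 1 - (1 - x) ^ n \<noteq> real n * x"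
      using pow_strict[OF assms(3,4)] by (intro AE_I2) force
    show "AE n in measure_pmf Q. 1 - (1 - x) ^ n \<le> real n * x"
      using pow_diff_le[of "1 - x" 1] assms by (intro AE_I2) auto
  qed simp
  also have "\<dots> = measure_pmf.expectation Q real * x" by simp
  finally show ?thesis .
qed

lemma phi_lower:
  assumes Q: "integrable (measure_pmf Q) real" and c: "c < measure_pmf.expectation Q real"
  shows "\<exists>x0>0. x0 \<le> 1 \<and> (\<forall>x. 0 \<le> x \<longrightarrow> x \<le> x0 \<longrightarrow> c * x \<le> 1 - phi Q (1 - x))"
proof -
  define xk where "xk k = inverse (real (Suc k))" for k
  define r where "r k n = (\<Sum>i<n. (1 - xk k) ^ i)" for k n
  have xk: "0 < xk k" "xk k \<le> 1" for k unfolding xk_def by (auto simp: inverse_le_1_iff)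
  have ae1: "AE n in measure_pmf Q. (\<lambda>k. r k n) \<longlonglongrightarrow> real n"
  proof (intro AE_I2)
    fix n
    have "(\<lambda>k. 1 - xk k) \<longlonglongrightarrow> 1 - 0"
      unfolding xk_def by (intro tendsto_diff tendsto_const LIMSEQ_inverse_real_of_nat)
    then have "(\<lambda>k. \<Sum>i<n. (1 - xk k) ^ i) \<longlonglongrightarrow> (\<Sum>i<n. (1 - 0) ^ i)"
      by (intro tendsto_sum tendsto_power) auto
    then show "(\<lambda>k. r k n) \<longlonglongrightarrow> real n" unfolding r_def by simp
  qed
  have ae2: "AE n in measure_pmf Q. norm (r k n) \<le> real n" for k
  proof (intro AE_I2)
    fix n
    have "0 \<le> r k n" unfolding r_def using xk[of k] by (intro sum_nonneg) auto
    moreover have "r k n \<le> (\<Sum>i<n. 1)" unfolding r_def using xk[of k]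
      by (intro sum_mono power_le_one) auto
    ultimately show "norm (r k n) \<le> real n" by simp
  qed
  have lim: "(\<lambda>k. measure_pmf.expectation Q (r k)) \<longlonglongrightarrow> measure_pmf.expectation Q real"
    by (rule integral_dominated_convergence[where w=real, OF _ _ Q ae1 ae2]) auto
  have intr: "integrable (measure_pmf Q) (r k)" for k
    by (rule integrable_dominated_convergence2[where w=real, OF _ _ Q ae1 ae2]) auto
  from order_tendstoD(1)[OF lim c] obtain k where k: "c < measure_pmf.expectation Q (r k)"
    by (auto simp: eventually_sequentially)
  show ?thesis
  proof (intro exI[of _ "xk k"] conjI allI impI xk)
    fix x :: real assume x: "0 \<le> x" "x \<le> xk k"
    have "c * x \<le> measure_pmf.expectation Q (r k) * x" using k x by (intro mult_right_mono) auto
    also have "\<dots> = measure_pmf.expectation Q (\<lambda>n. x * r k n)" by (simp add: mult.commute)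
    also have "\<dots> \<le> measure_pmf.expectation Q (\<lambda>n. 1 - (1 - x) ^ n)"
    proof (rule integral_mono)
      show "integrable (measure_pmf Q) (\<lambda>n. x * r k n)" by (intro integrable_mult_right intr)
      show "integrable (measure_pmf Q) (\<lambda>n. 1 - (1 - x) ^ n)"
        using x xk[of k] by (intro Bochner_Integration.integrable_diff int_pow) auto
      fix n
      have "x * r k n \<le> x * (\<Sum>i<n. (1 - x) ^ i)"
        unfolding r_def using x xk[of k] by (intro mult_left_mono sum_mono power_mono) auto
      also have "\<dots> = 1 - (1 - x) ^ n" by (simp add: one_diff_power_eq)
      finally show "x * r k n \<le> 1 - (1 - x) ^ n" .
    qed
    also have "\<dots> = 1 - phi Q (1 - x)"
      unfolding phi_def using x xk[of k] by (subst Bochner_Integration.integral_diff) (auto intro!: int_pow)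
    finally show "c * x \<le> 1 - phi Q (1 - x)" .
  qed
qed



definition Gs :: "('k::finite \<Rightarrow> 'k pmf) \<Rightarrow> 'k \<Rightarrow> real \<Rightarrow> 'k \<Rightarrow> real" where
  "Gs Disp i0 \<mu> j = (\<Sum>k. \<mu> ^ Suc k * H Disp i0 j (Suc k))"

lemma G_summable:
  assumes "0 \<le> \<mu>" "\<mu> < 1"
  shows "summable (\<lambda>k. \<mu> ^ Suc k * H Disp i0 j (Suc k))"
proof (rule summable_comparison_test'[where g="\<lambda>k. \<mu> ^ Suc k" and N=0])
  show "norm (\<mu> ^ Suc n * H Disp i0 j (Suc n)) \<le> \<mu> ^ Suc n" for n
    using assms H_bounds[of Disp i0 j "Suc n"] by (auto intro!: mult_left_le)
  show "summable (\<lambda>k. \<mu> ^ Suc k)"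
    using summable_geometric[of \<mu>] assms by (simp add: summable_mult)
qed

lemma G_nonneg:
  assumes "0 \<le> \<mu>" "\<mu> < 1" shows "0 \<le> Gs Disp i0 \<mu> j"
  unfolding Gs_def
proof (rule suminf_nonneg[OF G_summable[OF assms]])
  show "0 \<le> \<mu> ^ Suc n * H Disp i0 j (Suc n)" for n
    using assms H_bounds[of Disp i0 j "Suc n"] by simp
qed

lemma H_1: "j \<noteq> i0 \<Longrightarrow> H Disp i0 j (Suc 0) = pmf (Disp j) i0"
  by (simp add: H_Suc H_0 if_distrib cong: if_cong)

lemma H_SS:
  assumes "j \<noteq> i0"
  shows "H Disp i0 j (Suc (Suc k)) = (\<Sum>z\<in>UNIV - {i0}. pmf (Disp j) z * H Disp i0 z (Suc k))"
proof -
  have "H Disp i0 j (Suc (Suc k)) = (\<Sum>z\<in>UNIV. pmf (Disp j) z * H Disp i0 z (Suc k))"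
    by (rule H_Suc[OF assms])
  also have "\<dots> = pmf (Disp j) i0 * H Disp i0 i0 (Suc k) + (\<Sum>z\<in>UNIV - {i0}. pmf (Disp j) z * H Disp i0 z (Suc k))"
    by (rule sum.remove) auto
  finally show ?thesis by (simp add: H_i0_Suc)
qed

lemma G_eq:
  assumes "0 \<le> \<mu>" "\<mu> < 1" "j \<noteq> i0"
  shows "Gs Disp i0 \<mu> j = \<mu> * pmf (Disp j) i0 + \<mu> * (\<Sum>z\<in>UNIV - {i0}. pmf (Disp j) z * Gs Disp i0 \<mu> z)"
proof -
  let ?f = "\<lambda>k. \<mu> ^ Suc k * H Disp i0 j (Suc k)"
  have s: "summable ?f" by (rule G_summable[OF assms(1,2)])
  have "Gs Disp i0 \<mu> j = ?f 0 + (\<Sum>k. ?f (Suc k))"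
    unfolding Gs_def using suminf_split_head[OF s] by simp
  also have "(\<Sum>k. ?f (Suc k)) = (\<Sum>k. \<Sum>z\<in>UNIV - {i0}. (\<mu> * pmf (Disp j) z) * (\<mu> ^ Suc k * H Disp i0 z (Suc k)))"
    by (simp add: H_SS[OF assms(3)] sum_distrib_left algebra_simps)
  also have "\<dots> = (\<Sum>z\<in>UNIV - {i0}. \<Sum>k. (\<mu> * pmf (Disp j) z) * (\<mu> ^ Suc k * H Disp i0 z (Suc k)))"
    by (rule suminf_sum) (intro summable_mult G_summable assms)
  also have "\<dots> = (\<Sum>z\<in>UNIV - {i0}. (\<mu> * pmf (Disp j) z) * Gs Disp i0 \<mu> z)"
    unfolding Gs_def by (intro sum.cong refl suminf_mult G_summable assms)
  finally show ?thesis using assms by (simp add: H_1 sum_distrib_left algebra_simps)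
qed

lemma iterate_bound:
  fixes t :: "'k::finite \<Rightarrow> real"
  assumes m: "0 \<le> m" "m < 1" and t: "\<And>i. 0 \<le> t i" "\<And>i. t i \<le> 1"
    and ineq: "\<And>j. j \<noteq> i0 \<Longrightarrow> t j \<le> m * (\<Sum>z\<in>UNIV. pmf (Disp j) z * t z)"
    and j: "j \<noteq> i0"
  shows "t j \<le> Gs Disp i0 m j * t i0"
proof -
  define P where "P z n = (\<Sum>k<n. m ^ Suc k * H Disp i0 z (Suc k))" for z n
  have Pstep: "P j (Suc n) = m * pmf (Disp j) i0 + (\<Sum>z\<in>UNIV - {i0}. m * pmf (Disp j) z * P z n)"
    if "j \<noteq> i0" for j n
  proof -
    have "P j (Suc n) = m * H Disp i0 j (Suc 0) + (\<Sum>k<n. m ^ Suc (Suc k) * H Disp i0 j (Suc (Suc k)))"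
      unfolding P_def by (subst sum.lessThan_Suc_shift) simp
    also have "(\<Sum>k<n. m ^ Suc (Suc k) * H Disp i0 j (Suc (Suc k)))
        = (\<Sum>k<n. \<Sum>z\<in>UNIV - {i0}. m * pmf (Disp j) z * (m ^ Suc k * H Disp i0 z (Suc k)))"
      by (simp add: H_SS[OF that] sum_distrib_left algebra_simps)
    also have "\<dots> = (\<Sum>z\<in>UNIV - {i0}. m * pmf (Disp j) z * P z n)"
      unfolding P_def by (subst sum.swap) (simp add: sum_distrib_left)
    finally show ?thesis using that by (simp add: H_1)
  qed
  have claim: "\<forall>j. j \<noteq> i0 \<longrightarrow> t j \<le> P j n * t i0 + m ^ n" for n
  proof (induction n)
    case 0 then show ?case using t by (simp add: P_def)
  next
    case (Suc n)
    show ?case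
    proof (intro allI impI)
      fix j assume j: "j \<noteq> i0"
      have "t j \<le> m * (\<Sum>z\<in>UNIV. pmf (Disp j) z * t z)" by (rule ineq[OF j])
      also have "(\<Sum>z\<in>UNIV. pmf (Disp j) z * t z) = pmf (Disp j) i0 * t i0 + (\<Sum>z\<in>UNIV - {i0}. pmf (Disp j) z * t z)"
        by (rule sum.remove) auto
      also have "(\<Sum>z\<in>UNIV - {i0}. pmf (Disp j) z * t z) \<le> (\<Sum>z\<in>UNIV - {i0}. pmf (Disp j) z * (P z n * t i0 + m ^ n))"
        using Suc by (intro sum_mono mult_left_mono) auto
      also have "\<dots> = (\<Sum>z\<in>UNIV - {i0}. pmf (Disp j) z * P z n) * t i0 + (\<Sum>z\<in>UNIV - {i0}. pmf (Disp j) z) * m ^ n"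
        by (simp add: sum_distrib_left sum_distrib_right algebra_simps sum.distrib)
      finally have A: "t j \<le> m * (pmf (Disp j) i0 * t i0 + ((\<Sum>z\<in>UNIV - {i0}. pmf (Disp j) z * P z n) * t i0 + (\<Sum>z\<in>UNIV - {i0}. pmf (Disp j) z) * m ^ n))"
        using m by (auto intro!: mult_left_mono add_left_mono)
      have S1: "(\<Sum>z\<in>UNIV - {i0}. pmf (Disp j) z) \<le> 1"
      proof -
        have "(\<Sum>z\<in>UNIV - {i0}. pmf (Disp j) z) \<le> (\<Sum>z\<in>UNIV. pmf (Disp j) z)"
          by (intro sum_mono2) auto
        then show ?thesis by (simp add: sum_pmf_eq_1)
      qed
      have "(\<Sum>z\<in>UNIV - {i0}. pmf (Disp j) z) * m ^ n \<le> 1 * m ^ n"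
        using S1 m by (intro mult_right_mono) auto
      then have "t j \<le> m * (pmf (Disp j) i0 * t i0 + ((\<Sum>z\<in>UNIV - {i0}. pmf (Disp j) z * P z n) * t i0 + 1 * m ^ n))"
        using A m by (smt (verit) mult_left_mono)
      also have "\<dots> = P j (Suc n) * t i0 + m ^ Suc n"
        using j by (simp add: Pstep sum_distrib_left algebra_simps)
      finally show "t j \<le> P j (Suc n) * t i0 + m ^ Suc n" .
    qed
  qed
  have PG: "P j n \<le> Gs Disp i0 m j" for n
    unfolding P_def Gs_def using H_bounds m
    by (intro sum_le_suminf G_summable) (auto intro!: mult_nonneg_nonneg)
  have le: "t j \<le> Gs Disp i0 m j * t i0 + m ^ n" for n
    using claim[of n] j PG[of n] t(1)[of i0] by (meson add_right_mono mult_right_mono order_trans)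
  have "(\<lambda>n. Gs Disp i0 m j * t i0 + m ^ n) \<longlonglongrightarrow> Gs Disp i0 m j * t i0 + 0"
    using m by (intro tendsto_add tendsto_const LIMSEQ_power_zero) auto
  then show ?thesis using le by (intro LIMSEQ_le_const[where X="\<lambda>n. Gs Disp i0 m j * t i0 + m ^ n"]) auto
qed



lemma Fm_mono:
  assumes "\<And>i. 0 \<le> v i" "\<And>i. v i \<le> w i" "\<And>i. w i \<le> 1"
  shows "Fm N Disp v a \<le> Fm N Disp w a"
proof -
  have w0: "\<And>i. 0 \<le> w i" using assms order_trans by blast
  have v1: "\<And>i. v i \<le> 1" using assms order_trans by blast
  show ?thesis unfolding Fm_def
  proof (rule phi_mono)
    show "0 \<le> (\<Sum>j\<in>UNIV. pmf (Disp a) j * v j)" using disp_sum_le1[of v "Disp a"] assms v1 by blast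
    show "(\<Sum>j\<in>UNIV. pmf (Disp a) j * v j) \<le> (\<Sum>j\<in>UNIV. pmf (Disp a) j * w j)"
      using assms by (intro sum_mono mult_left_mono) auto
    show "(\<Sum>j\<in>UNIV. pmf (Disp a) j * w j) \<le> 1" using disp_sum_le1[of w "Disp a"] assms w0 by blast
  qed
qed

lemma sum_split_i0:
  fixes f :: "'k::finite \<Rightarrow> real"
  shows "(\<Sum>z\<in>UNIV. f z) = f i0 + (\<Sum>z\<in>UNIV - {i0}. f z)"
  by (rule sum.remove) auto

lemma d_i0:
  fixes Disp :: "'k::finite \<Rightarrow> 'k pmf"
  shows "pmf (Disp i0) i0 = 1 - (\<Sum>j\<in>UNIV - {i0}. pmf (Disp i0) j)"
  using sum_split_i0[of "pmf (Disp i0)" i0] by (simp add: sum_pmf_eq_1)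

lemma sum_one_minus:
  fixes Disp :: "'k::finite \<Rightarrow> 'k pmf"
  shows "(\<Sum>z\<in>UNIV. pmf (Disp j) z * (1 - c * v z)) = 1 - c * (\<Sum>z\<in>UNIV. pmf (Disp j) z * v z)"
  by (simp add: algebra_simps sum_subtractf sum_distrib_left sum_pmf_eq_1)

lemma R_summable:
  assumes "0 \<le> \<mu>" "\<mu> < 1"
  shows "summable (\<lambda>k. \<mu> ^ Suc k * R Disp i0 j (Suc k))"
proof (rule summable_comparison_test'[where g="\<lambda>k. \<mu> ^ Suc k" and N=0])
  show "norm (\<mu> ^ Suc n * R Disp i0 j (Suc n)) \<le> \<mu> ^ Suc n" for n
    using assms R_bounds[of Disp i0 j "Suc n"] by (auto intro!: mult_left_le)
  show "summable (\<lambda>k. \<mu> ^ Suc k)"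
    using summable_geometric[of \<mu>] assms by (simp add: summable_mult)
qed

lemma pR:
  "(\<Sum>j\<in>UNIV - {i0}. pmf (Disp i0) j) * R Disp i0 i0 k = (\<Sum>z\<in>UNIV - {i0}. pmf (Disp i0) z * H Disp i0 z k)"
proof -
  have "R Disp i0 i0 k = pmf (Disp i0) i0 * R Disp i0 i0 k + (\<Sum>z\<in>UNIV - {i0}. pmf (Disp i0) z * R Disp i0 z k)"
    using R_i0[of Disp i0 k] sum_split_i0[of "\<lambda>z. pmf (Disp i0) z * R Disp i0 z k" i0] by simp
  also have "(\<Sum>z\<in>UNIV - {i0}. pmf (Disp i0) z * R Disp i0 z k) = (\<Sum>z\<in>UNIV - {i0}. pmf (Disp i0) z * H Disp i0 z k)"
    by (intro sum.cong) (auto simp: R_H)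
  finally show ?thesis by (simp add: d_i0 algebra_simps)
qed

definition W where "W Disp i0 \<mu> = (\<Sum>j\<in>UNIV - {i0}. pmf (Disp i0) j * Gs Disp i0 \<mu> j)"

lemma ep:
  assumes "0 \<le> m" "m < 1"
  shows "(\<Sum>k. m ^ Suc k * return_prob Disp i0 (Suc k)) * (\<Sum>j\<in>UNIV - {i0}. pmf (Disp i0) j) = W Disp i0 m"
proof -
  let ?p = "\<Sum>j\<in>UNIV - {i0}. pmf (Disp i0) j"
  have "(\<Sum>k. m ^ Suc k * return_prob Disp i0 (Suc k)) * ?p = (\<Sum>k. m ^ Suc k * R Disp i0 i0 (Suc k) * ?p)"
    unfolding return_prob_R by (rule suminf_mult2[OF R_summable[OF assms]])
  also have "\<dots> = (\<Sum>k. \<Sum>z\<in>UNIV - {i0}. pmf (Disp i0) z * (m ^ Suc k * H Disp i0 z (Suc k)))"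
  proof (rule suminf_cong)
    fix k
    have "m ^ Suc k * R Disp i0 i0 (Suc k) * ?p = m ^ Suc k * (?p * R Disp i0 i0 (Suc k))" by simp
    also have "\<dots> = (\<Sum>z\<in>UNIV - {i0}. pmf (Disp i0) z * (m ^ Suc k * H Disp i0 z (Suc k)))"
      by (simp only: pR) (simp add: sum_distrib_left algebra_simps)
    finally show "m ^ Suc k * R Disp i0 i0 (Suc k) * ?p = (\<Sum>z\<in>UNIV - {i0}. pmf (Disp i0) z * (m ^ Suc k * H Disp i0 z (Suc k)))" .
  qed
  also have "\<dots> = (\<Sum>z\<in>UNIV - {i0}. \<Sum>k. pmf (Disp i0) z * (m ^ Suc k * H Disp i0 z (Suc k)))"
    by (rule suminf_sum) (intro summable_mult G_summable assms)
  also have "\<dots> = W Disp i0 m"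
    unfolding W_def Gs_def by (intro sum.cong refl suminf_mult G_summable assms)
  finally show ?thesis .
qed

lemma geo_Suc: "0 \<le> (c::real) \<Longrightarrow> c < 1 \<Longrightarrow> (\<Sum>k. c ^ Suc k) = c / (1 - c)"
  using suminf_mult[OF summable_geometric[of c], of c] suminf_geometric[of c] by simp

lemma G_diff:
  assumes "0 \<le> \<mu>" "\<mu> \<le> m" "m < 1"
  shows "Gs Disp i0 m j - Gs Disp i0 \<mu> j \<le> (m - \<mu>) / (1 - m)^2"
proof -
  have s1: "summable (\<lambda>k. m ^ Suc k * H Disp i0 j (Suc k))" using assms by (intro G_summable) auto
  have s2: "summable (\<lambda>k. \<mu> ^ Suc k * H Disp i0 j (Suc k))" using assms by (intro G_summable) auto
  have g1: "summable (\<lambda>k. m ^ Suc k)" using summable_geometric[of m] assms by (simp add: summable_mult)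
  have g2: "summable (\<lambda>k. \<mu> ^ Suc k)" using summable_geometric[of \<mu>] assms by (simp add: summable_mult)
  have "Gs Disp i0 m j - Gs Disp i0 \<mu> j = (\<Sum>k. m ^ Suc k * H Disp i0 j (Suc k) - \<mu> ^ Suc k * H Disp i0 j (Suc k))"
    unfolding Gs_def by (subst suminf_diff[OF s1 s2]) (rule refl)
  also have "\<dots> \<le> (\<Sum>k. m ^ Suc k - \<mu> ^ Suc k)"
  proof (rule suminf_le)
    show "summable (\<lambda>k. m ^ Suc k * H Disp i0 j (Suc k) - \<mu> ^ Suc k * H Disp i0 j (Suc k))"
      by (rule summable_diff[OF s1 s2])
    show "summable (\<lambda>k. m ^ Suc k - \<mu> ^ Suc k)" by (rule summable_diff[OF g1 g2])
    fix k
    have d: "0 \<le> m ^ Suc k - \<mu> ^ Suc k" using assms power_mono[of \<mu> m "Suc k"] by linarith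
    have "(m ^ Suc k - \<mu> ^ Suc k) * H Disp i0 j (Suc k) \<le> (m ^ Suc k - \<mu> ^ Suc k) * 1"
      using d H_bounds[of Disp i0 j "Suc k"] by (intro mult_left_mono) auto
    then show "m ^ Suc k * H Disp i0 j (Suc k) - \<mu> ^ Suc k * H Disp i0 j (Suc k) \<le> m ^ Suc k - \<mu> ^ Suc k"
      by (simp add: algebra_simps)
  qed
  also have "\<dots> = m / (1 - m) - \<mu> / (1 - \<mu>)"
    using suminf_diff[OF g1 g2] geo_Suc[of m] geo_Suc[of \<mu>] assms by simp
  also have "\<dots> = (m - \<mu>) / ((1 - m) * (1 - \<mu>))"
    using assms by (simp add: field_simps)
  also have "\<dots> \<le> (m - \<mu>) / (1 - m)^2"
    using assms by (intro divide_left_mono) (auto simp: power2_eq_square intro!: mult_left_mono mult_pos_pos)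
  finally show ?thesis .
qed

lemma W_diff:
  assumes "0 \<le> \<mu>" "\<mu> \<le> m" "m < 1"
  shows "W Disp i0 m - W Disp i0 \<mu> \<le> (m - \<mu>) / (1 - m)^2"
proof -
  have "W Disp i0 m - W Disp i0 \<mu> = (\<Sum>j\<in>UNIV - {i0}. pmf (Disp i0) j * (Gs Disp i0 m j - Gs Disp i0 \<mu> j))"
    unfolding W_def by (simp add: sum_subtractf algebra_simps)
  also have "\<dots> \<le> (\<Sum>j\<in>UNIV - {i0}. pmf (Disp i0) j * ((m - \<mu>) / (1 - m)^2))"
    using G_diff[OF assms] by (intro sum_mono mult_left_mono) auto
  also have "\<dots> = (\<Sum>j\<in>UNIV - {i0}. pmf (Disp i0) j) * ((m - \<mu>) / (1 - m)^2)"
    by (rule sum_distrib_right[symmetric])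
  also have "\<dots> \<le> 1 * ((m - \<mu>) / (1 - m)^2)"
  proof (rule mult_right_mono)
    have "(\<Sum>j\<in>UNIV - {i0}. pmf (Disp i0) j) \<le> (\<Sum>j\<in>UNIV. pmf (Disp i0) j)" by (intro sum_mono2) auto
    then show "(\<Sum>j\<in>UNIV - {i0}. pmf (Disp i0) j) \<le> 1" by (simp add: sum_pmf_eq_1)
  qed (use assms in auto)
  finally show ?thesis by simp
qed

lemma W_nonneg: "0 \<le> \<mu> \<Longrightarrow> \<mu> < 1 \<Longrightarrow> 0 \<le> W Disp i0 \<mu>"
  unfolding W_def by (intro sum_nonneg mult_nonneg_nonneg G_nonneg) auto



lemma dir1:
  fixes N :: "'k::finite \<Rightarrow> nat pmf" and Disp :: "'k \<Rightarrow> 'k pmf" and i0 :: 'k and M m \<epsilon> :: real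
  assumes A2: "\<And>i. integrable (measure_pmf (N i)) real"
    and hM: "measure_pmf.expectation (N i0) real = M" and M1: "M > 1"
    and hm: "\<And>i. i \<noteq> i0 \<Longrightarrow> measure_pmf.expectation (N i) real = m" and m0: "0 \<le> m" and m1: "m < 1"
    and U: "\<And>n. (Fm N Disp ^^ n) (\<lambda>_. 0) i0 \<le> 1 - \<epsilon>" and eps: "\<epsilon> > 0"
  shows "M * (1 - (\<Sum>j\<in>UNIV - {i0}. pmf (Disp i0) j)) + M * W Disp i0 m > 1"
proof -
  define u where "u n = (Fm N Disp ^^ n) (\<lambda>_. 0)" for n
  define p where "p = (\<Sum>j\<in>UNIV - {i0}. pmf (Disp i0) j)"
  define EN where "EN i = measure_pmf.expectation (N i) real" for i
  have EN0: "0 \<le> EN i" for i unfolding EN_def by (rule integral_nonneg_AE) auto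
  have ub: "0 \<le> u n i" "u n i \<le> 1" for n i
    unfolding u_def using Fm_iter_bounds[where u="\<lambda>_. 0" and N=N and Disp=Disp and n=n and a=i] by auto
  have uS: "u (Suc n) i = Fm N Disp (u n) i" for n i unfolding u_def by simp
  have inc1: "u n i \<le> u (Suc n) i" for n i
  proof (induction n arbitrary: i)
    case 0 then show ?case using ub[of "Suc 0" i] by (simp add: u_def)
  next
    case (Suc n) then show ?case
    proof -
      have b: "Fm N Disp (u n) j \<le> 1" for j using ub[of "Suc n" j] uS[of n j] by simp
      show ?thesis unfolding uS[of "Suc n"] uS[of n] by (rule Fm_mono) (use ub Suc b uS in auto)
    qed
  qed
  have inc: "incseq (\<lambda>n. u n i)" for i by (rule incseq_SucI) (rule inc1)
  define q where "q i = (SUP n. u n i)" for i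
  have lim: "(\<lambda>n. u n i) \<longlonglongrightarrow> q i" for i
    unfolding q_def by (rule LIMSEQ_incseq_SUP) (use ub inc in \<open>auto intro!: bdd_aboveI[where M=1]\<close>)
  have uq: "u n i \<le> q i" for n i by (rule incseq_le[OF inc lim])
  have q1: "q i \<le> 1" for i by (rule LIMSEQ_le_const2[OF lim]) (use ub in auto)
  have q0: "0 \<le> q i" for i using uq[of 0 i] ub[of 0 i] by simp
  have qi0: "q i0 \<le> 1 - \<epsilon>" by (rule LIMSEQ_le_const2[OF lim]) (use U u_def in auto)
  have Fq: "Fm N Disp q i \<le> q i" for i
  proof -
    have le: "Fm N Disp q i \<le> q i + EN i * (\<Sum>j\<in>UNIV. pmf (Disp i) j * (q j - u n j))" for n
    proof -
      let ?x = "\<Sum>j\<in>UNIV. pmf (Disp i) j * u n j" and ?y = "\<Sum>j\<in>UNIV. pmf (Disp i) j * q j"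
      have "phi (N i) ?y - phi (N i) ?x \<le> EN i * (?y - ?x)"
        unfolding EN_def
      proof (rule phi_lip[OF A2])
        show "0 \<le> ?x" using disp_sum_le1[of "u n" "Disp i"] ub by blast
        show "?x \<le> ?y" using uq by (intro sum_mono mult_left_mono) auto
        show "?y \<le> 1" using disp_sum_le1[of q "Disp i"] q0 q1 by blast
      qed
      moreover have "phi (N i) ?x = u (Suc n) i" by (simp add: uS Fm_def)
      moreover have "?y - ?x = (\<Sum>j\<in>UNIV. pmf (Disp i) j * (q j - u n j))"
        by (simp add: sum_subtractf algebra_simps)
      ultimately show ?thesis using uq[of "Suc n" i] unfolding Fm_def by simp
    qed
    have "(\<lambda>n. q i + EN i * (\<Sum>j\<in>UNIV. pmf (Disp i) j * (q j - u n j))) \<longlonglongrightarrow> q i + EN i * (\<Sum>j\<in>UNIV. pmf (Disp i) j * (q j - q j))"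
      by (intro tendsto_intros lim)
    then show ?thesis using le by (intro LIMSEQ_le_const[where X="\<lambda>n. q i + EN i * (\<Sum>j\<in>UNIV. pmf (Disp i) j * (q j - u n j))"]) auto
  qed
  define t where "t i = 1 - q i" for i
  define x where "x i = (\<Sum>j\<in>UNIV. pmf (Disp i) j * t j)" for i
  have t01: "0 \<le> t i" "t i \<le> 1" for i unfolding t_def using q0 q1 by auto
  have x01: "0 \<le> x i" "x i \<le> 1" for i unfolding x_def using disp_sum_le1[of t "Disp i"] t01 by auto
  have qx: "(\<Sum>j\<in>UNIV. pmf (Disp i) j * q j) = 1 - x i" for i
    using sum_one_minus[of Disp i 1 t] unfolding x_def t_def by simp
  have tphi: "t i \<le> 1 - phi (N i) (1 - x i)" for i
    using Fq[of i] unfolding Fm_def qx t_def by simp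
  have tlin: "t i \<le> EN i * x i" for i
    using tphi[of i] phi_lin[OF A2 x01] unfolding EN_def by (meson order_trans)
  have tj: "t j \<le> Gs Disp i0 m j * t i0" if j: "j \<noteq> i0" for j
  proof (rule iterate_bound[OF m0 m1 t01 _ j])
    fix j assume "j \<noteq> i0"
    then show "t j \<le> m * (\<Sum>z\<in>UNIV. pmf (Disp j) z * t z)"
      using tlin[of j] hm[of j] unfolding EN_def x_def by simp
  qed
  have ti0: "t i0 \<ge> \<epsilon>" unfolding t_def using qi0 by simp
  have xpos: "x i0 > 0"
  proof (rule ccontr)
    assume "\<not> x i0 > 0" then have "x i0 = 0" using x01[of i0] by simp
    then have "t i0 \<le> 0" using tlin[of i0] by simp
    then show False using ti0 eps by simp
  qed
  have strict: "t i0 < M * x i0"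
    using tphi[of i0] phi_strict[OF A2, of i0 "x i0"] hM M1 xpos x01[of i0] by simp
  have "x i0 = pmf (Disp i0) i0 * t i0 + (\<Sum>z\<in>UNIV - {i0}. pmf (Disp i0) z * t z)"
    unfolding x_def by (rule sum_split_i0)
  also have "\<dots> \<le> (1 - p) * t i0 + (\<Sum>z\<in>UNIV - {i0}. pmf (Disp i0) z * (Gs Disp i0 m z * t i0))"
    using tj by (auto simp: d_i0 p_def intro!: sum_mono mult_left_mono)
  also have "\<dots> = (1 - p + W Disp i0 m) * t i0"
    by (simp add: W_def sum_distrib_right sum_distrib_left algebra_simps)
  finally have "M * x i0 \<le> M * ((1 - p + W Disp i0 m) * t i0)" using M1 by simp
  with strict have "t i0 < (M * (1 - p) + M * W Disp i0 m) * t i0" by (simp add: algebra_simps)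
  then show ?thesis using ti0 eps unfolding p_def by (simp add: mult_less_cancel_right2)
qed



lemma dir2:
  fixes N :: "'k::finite \<Rightarrow> nat pmf" and Disp :: "'k \<Rightarrow> 'k pmf" and i0 :: 'k and M m :: real
  assumes A2: "\<And>i. integrable (measure_pmf (N i)) real"
    and hM: "measure_pmf.expectation (N i0) real = M" and M1: "M > 1"
    and hm: "\<And>i. i \<noteq> i0 \<Longrightarrow> measure_pmf.expectation (N i) real = m" and m0: "0 \<le> m" and m1: "m < 1"
    and rho: "M * (1 - (\<Sum>j\<in>UNIV - {i0}. pmf (Disp i0) j)) + M * W Disp i0 m > 1"
  shows "\<exists>\<epsilon>>0. \<forall>n. (Fm N Disp ^^ n) (\<lambda>_. 0) i0 \<le> 1 - \<epsilon>"
proof -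
  define p where "p = (\<Sum>j\<in>UNIV - {i0}. pmf (Disp i0) j)"
  define r where "r = M * (1 - p) + M * W Disp i0 m"
  have r1: "r > 1" using rho unfolding r_def p_def .
  define \<delta> where "\<delta> = (r - 1) * (1 - m)^2 / (2 * M)"
  have \<delta>0: "\<delta> > 0" unfolding \<delta>_def using r1 M1 m1 by (auto intro!: divide_pos_pos mult_pos_pos)
  define \<mu> where "\<mu> = max 0 (m - \<delta>)"
  have \<mu>: "0 \<le> \<mu>" "\<mu> \<le> m" "\<mu> < 1" "m - \<mu> \<le> \<delta>" unfolding \<mu>_def using m0 m1 \<delta>0 by auto
  have \<mu>c: "\<mu> < m \<or> \<mu> = 0" unfolding \<mu>_def using \<delta>0 by auto
  define r' where "r' = M * (1 - p) + M * W Disp i0 \<mu>"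
  have "W Disp i0 m - W Disp i0 \<mu> \<le> (m - \<mu>) / (1 - m)^2" by (rule W_diff) (use \<mu> m1 in auto)
  also have "\<dots> \<le> \<delta> / (1 - m)^2" using \<mu> m1 by (intro divide_right_mono) auto
  also have "\<dots> = (r - 1) / (2 * M)" unfolding \<delta>_def using m1 M1 by (simp add: field_simps)
  finally have h: "W Disp i0 m - W Disp i0 \<mu> \<le> (r - 1) / (2 * M)" .
  have "M * (W Disp i0 m - W Disp i0 \<mu>) \<le> M * ((r - 1) / (2 * M))" using h M1 by (intro mult_left_mono) auto
  also have "\<dots> = (r - 1) / 2" using M1 by simp
  finally have r'1: "r' > 1" using r1 unfolding r'_def r_def by (simp add: algebra_simps)
  define v where "v j = (if j = i0 then 1 else Gs Disp i0 \<mu> j)" for j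
  have v0: "0 \<le> v j" for j unfolding v_def using G_nonneg[OF \<mu>(1,3)] by auto
  define Dv where "Dv j = (\<Sum>z\<in>UNIV. pmf (Disp j) z * v z)" for j
  have Dv0: "0 \<le> Dv j" for j unfolding Dv_def using v0 by (auto intro!: sum_nonneg)
  have Dv_i0: "M * Dv i0 = r'"
  proof -
    have "Dv i0 = pmf (Disp i0) i0 * v i0 + (\<Sum>z\<in>UNIV - {i0}. pmf (Disp i0) z * v z)"
      unfolding Dv_def by (rule sum_split_i0)
    also have "(\<Sum>z\<in>UNIV - {i0}. pmf (Disp i0) z * v z) = W Disp i0 \<mu>"
      unfolding W_def v_def by (intro sum.cong) auto
    finally have "Dv i0 = 1 - p + W Disp i0 \<mu>" unfolding p_def by (simp add: v_def d_i0)
    then have "M * Dv i0 = M * (1 - p + W Disp i0 \<mu>)" by simp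
    also have "\<dots> = r'" unfolding r'_def by (simp add: algebra_simps)
    finally show ?thesis .
  qed
  have Dv_j: "v j = \<mu> * Dv j" if "j \<noteq> i0" for j
  proof -
    have "Dv j = pmf (Disp j) i0 * v i0 + (\<Sum>z\<in>UNIV - {i0}. pmf (Disp j) z * v z)"
      unfolding Dv_def by (rule sum_split_i0)
    also have "(\<Sum>z\<in>UNIV - {i0}. pmf (Disp j) z * v z) = (\<Sum>z\<in>UNIV - {i0}. pmf (Disp j) z * Gs Disp i0 \<mu> z)"
      unfolding v_def by (intro sum.cong) auto
    finally show ?thesis using G_eq[OF \<mu>(1,3) that, of Disp] that by (simp add: v_def algebra_simps)
  qed
  define c0 where "c0 = M / r'"
  have c0: "c0 < M" "c0 * Dv i0 = 1" unfolding c0_def using r'1 M1 Dv_i0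
    by (auto simp: field_simps)
  define cc where "cc j = (if j = i0 then c0 else \<mu>)" for j
  have ex: "\<exists>x0>0. x0 \<le> 1 \<and> (\<forall>x. 0 \<le> x \<longrightarrow> x \<le> x0 \<longrightarrow> cc j * x \<le> 1 - phi (N j) (1 - x))" for j
  proof (cases "j = i0")
    case True then show ?thesis using phi_lower[OF A2, of c0 j] c0 hM unfolding cc_def by simp
  next
    case False
    show ?thesis
    proof (cases "\<mu> < m")
      case True then show ?thesis using phi_lower[OF A2, of \<mu> j] hm[OF False] False unfolding cc_def by simp
    next
      case F2: False
      then have "\<mu> = 0" using \<mu>c by simp
      then show ?thesis unfolding cc_def using False phi_bounds[of "1 - _" "N j"]
        by (intro exI[of _ 1]) auto
    qed
  qed
  then obtain X where X: "\<And>j. X j > 0" "\<And>j. X j \<le> 1"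
    "\<And>j x. 0 \<le> x \<Longrightarrow> x \<le> X j \<Longrightarrow> cc j * x \<le> 1 - phi (N j) (1 - x)"
    by metis
  define X0 where "X0 = Min (range X)"
  have X0: "X0 > 0" "X0 \<le> X j" for j unfolding X0_def using X(1) by (auto simp: Min_gr_iff intro!: Min_le)
  define B where "B = Max (range v) + 1"
  have mx: "v j \<le> Max (range v)" for j by (rule Max_ge) auto
  have vB: "v j \<le> B" "1 \<le> B" for j
  proof -
    have vi0: "v i0 = 1" by (simp add: v_def)
    show "v j \<le> B" "1 \<le> B" unfolding B_def using mx[of j] mx[of i0] vi0 v0[of j] by linarith+
  qed
  have DvB: "Dv j \<le> B" for j
  proof -
    have "Dv j \<le> (\<Sum>z\<in>UNIV. pmf (Disp j) z * B)" unfolding Dv_def using vB by (intro sum_mono mult_left_mono) auto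
    then show ?thesis by (simp add: sum_distrib_right[symmetric] sum_pmf_eq_1)
  qed
  define \<epsilon> where "\<epsilon> = min X0 1 / B"
  have eps0: "\<epsilon> > 0" unfolding \<epsilon>_def using X0 vB by auto
  have epsB: "\<epsilon> * B = min X0 1" unfolding \<epsilon>_def using vB by simp
  have epsv: "\<epsilon> * v j \<le> 1" for j
  proof -
    have "\<epsilon> * v j \<le> \<epsilon> * B" using vB eps0 by (intro mult_left_mono) auto
    then show ?thesis using epsB by simp
  qed
  have epsD: "\<epsilon> * Dv j \<le> X j" for j
  proof -
    have "\<epsilon> * Dv j \<le> \<epsilon> * B" using DvB eps0 by (intro mult_left_mono) auto
    then show ?thesis using epsB X0(2)[of j] by simp
  qed
  define s where "s j = 1 - \<epsilon> * v j" for j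
  have s01: "0 \<le> s j" "s j \<le> 1" for j unfolding s_def using epsv v0 eps0 by auto
  have Fs: "Fm N Disp s j \<le> s j" for j
  proof -
    have "Fm N Disp s j = phi (N j) (1 - \<epsilon> * Dv j)"
      unfolding Fm_def s_def Dv_def by (simp add: sum_one_minus)
    moreover have "cc j * (\<epsilon> * Dv j) \<le> 1 - phi (N j) (1 - \<epsilon> * Dv j)"
      using X(3)[OF _ epsD[of j]] eps0 Dv0 by simp
    moreover have "cc j * (\<epsilon> * Dv j) = \<epsilon> * v j"
    proof (cases "j = i0")
      case True then show ?thesis using c0 by (simp add: cc_def v_def)
    next
      case False then show ?thesis using Dv_j[OF False] by (simp add: cc_def)
    qed
    ultimately show ?thesis unfolding s_def by simp
  qed
  have us: "(Fm N Disp ^^ n) (\<lambda>_. 0) j \<le> s j" for n j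
  proof (induction n arbitrary: j)
    case 0 then show ?case using s01 by simp
  next
    case (Suc n)
    have "(Fm N Disp ^^ Suc n) (\<lambda>_. 0) j = Fm N Disp ((Fm N Disp ^^ n) (\<lambda>_. 0)) j" by simp
    also have "\<dots> \<le> Fm N Disp s j"
      by (rule Fm_mono) (use Suc s01 Fm_iter_bounds[where u="\<lambda>_. 0" and N=N and Disp=Disp and n=n] in auto)
    also have "\<dots> \<le> s j" by (rule Fs)
    finally show ?case .
  qed
  show ?thesis
    using us[of _ i0] eps0 unfolding s_def v_def by auto
qed



theorem proposition3p2:
  fixes N :: "'k::finite \<Rightarrow> nat pmf" and Disp :: "'k \<Rightarrow> 'k pmf" and i0 :: 'k
    and M m p e :: real
  assumes K2: "CARD('k) \<ge> 2"
    and A1: "pmf (N i0) 1 < 1"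
    and A2: "\<And>i. integrable (measure_pmf (N i)) real"
    and A4: "\<And>i j. (i, j) \<in> {(a, b). pmf (Disp a) b > 0}\<^sup>+"
    and hM: "measure_pmf.expectation (N i0) real = M" and M1: "M > 1"
    and hm: "\<And>i. i \<noteq> i0 \<Longrightarrow> measure_pmf.expectation (N i) real = m" and m1: "m < 1"
    and hp: "p = (\<Sum>j\<in>UNIV - {i0}. pmf (Disp i0) j)"
    and he: "e = (\<Sum>k. m ^ Suc k * return_prob Disp i0 (Suc k))"
  shows "persist_prob N Disp (unit_vec i0) > 0 \<longleftrightarrow> M * (1 - p) + e * M * p > 1"
proof -
  obtain i where i: "i \<noteq> i0"
  proof -
    have "\<not> UNIV \<subseteq> {i0}"
    proof
      assume "UNIV \<subseteq> {i0}"
      then have "card (UNIV :: 'k set) \<le> card {i0}" by (intro card_mono) auto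
      then show False using K2 by simp
    qed
    then show ?thesis using that by auto
  qed
  have m0: "0 \<le> m" using hm[OF i] by (metis integral_nonneg_AE AE_I2 of_nat_0_le_iff)
  have ep: "e * p = W Disp i0 m" unfolding he hp by (rule ep[OF m0 m1])
  have rhs: "M * (1 - p) + e * M * p = M * (1 - p) + M * W Disp i0 m"
    using ep by (simp add: algebra_simps)
  have U: "(Fm N Disp ^^ n) (\<lambda>_. 0) i0 = mf ((Fm N Disp ^^ n) (\<lambda>_. 0)) (unit_vec i0)" for n
    by (simp add: mf_unit)
  show ?thesis
  proof
    assume pos: "persist_prob N Disp (unit_vec i0) > 0"
    have up: "(Fm N Disp ^^ n) (\<lambda>_. 0) i0 \<le> 1 - persist_prob N Disp (unit_vec i0)" for n
      using persist_upper[of N Disp "unit_vec i0" n] U[of n] by simp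
    have "M * (1 - (\<Sum>j\<in>UNIV - {i0}. pmf (Disp i0) j)) + M * W Disp i0 m > 1"
      by (rule dir1[where N=N and Disp=Disp and \<epsilon>="persist_prob N Disp (unit_vec i0)"])
        (use A2 hM M1 hm m0 m1 up pos in auto)
    then have "M * (1 - p) + M * W Disp i0 m > 1" using hp by simp
    then show "M * (1 - p) + e * M * p > 1" by (simp only: rhs)
  next
    assume "M * (1 - p) + e * M * p > 1"
    then have "M * (1 - p) + M * W Disp i0 m > 1" by (simp only: rhs)
    then have "M * (1 - (\<Sum>j\<in>UNIV - {i0}. pmf (Disp i0) j)) + M * W Disp i0 m > 1"
      using hp by simp
    then have "\<exists>\<epsilon>>0. \<forall>n. (Fm N Disp ^^ n) (\<lambda>_. 0) i0 \<le> 1 - \<epsilon>"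
      by (intro dir2[where N=N and Disp=Disp]) (use A2 hM M1 hm m0 m1 in auto)
    then obtain \<epsilon> where eps: "\<epsilon> > 0"
      "\<And>n. (Fm N Disp ^^ n) (\<lambda>_. 0) i0 \<le> 1 - \<epsilon>" by blast
    have "1 - (1 - \<epsilon>) \<le> persist_prob N Disp (unit_vec i0)"
      by (rule persist_lower) (use eps(2) U in auto)
    then show "persist_prob N Disp (unit_vec i0) > 0" using eps(1) by simp
  qed
qed

end
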